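(* Let $\alpha$ generate an infinite cyclic discrete group $A=\langle\alpha\rangle$ and let $M$ be a polycontractable LC $A$-module. Then the map $x\mapsto \alpha x-x$ is an automorphism of the topological $A$-module $M$ (a bijective continuous homomorphism with continuous inverse).
   Context: An LC $A$-module is an LCA group with a continuous action of $A$ by topological automorphisms. Contractable: some element of $A$ acts as a contracting automorphism ($a^nx\to0$ as $n\to+\infty$ for all $x$). Polycontractable: a finite topological direct sum of closed contractable submodules; for $A=\langle\alpha\rangle$ this means a direct sum of a closed submodule contracted by $\alpha$ and one contracted by $\alpha^{-1}$. *)

theory Defs
  imports "HOL-Analysis.Analysis"
begin

text \<open>An LCA group: a Hausdorff, locally compact abelian topological group.
  We model it by a type of class topological_ab_group_add and t2_space
  whose (euclidean) topology is locally compact.\<close>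

definition LCA_group :: "'a::{topological_ab_group_add, t2_space} itself \<Rightarrow> bool" where
  "LCA_group _ \<longleftrightarrow> locally_compact_space (euclidean :: 'a topology)"

text \<open>An LC module over the infinite cyclic group generated by alpha is given
  by one such automorphism alpha (the generator acts by alpha, n by alpha^n).\<close>

definition top_group_aut :: "('a::topological_ab_group_add \<Rightarrow> 'a) \<Rightarrow> bool" where
  "top_group_aut f \<longleftrightarrow> (\<forall>x y. f (x + y) = f x + f y) \<and> (\<exists>g. homeomorphism UNIV UNIV f g)"

text \<open>Closed submodule: closed subgroup invariant under the action of the
  cyclic group, i.e. alpha maps it onto itself.\<close>

definition closed_submodule :: "('a::topological_ab_group_add \<Rightarrow> 'a) \<Rightarrow> 'a set \<Rightarrow> bool" where
  "closed_submodule \<alpha> N \<longleftrightarrow> closed N \<and> 0 \<in> N \<and> (\<forall>x\<in>N. \<forall>y\<in>N. x - y \<in> N) \<and> \<alpha> ` N = N"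

definition contracted_by :: "('a::topological_ab_group_add \<Rightarrow> 'a) \<Rightarrow> 'a set \<Rightarrow> bool" where
  "contracted_by f N \<longleftrightarrow> (\<forall>x\<in>N. (\<lambda>n. (f ^^ n) x) \<longlonglongrightarrow> 0)"

text \<open>Topological direct sum: trivial intersection and
  every element decomposes as a sum via continuous projections.\<close>

definition polycontractable :: "('a::topological_ab_group_add \<Rightarrow> 'a) \<Rightarrow> bool" where
  "polycontractable \<alpha> \<longleftrightarrow>
     (\<exists>M1 M2 p1 p2.
        closed_submodule \<alpha> M1 \<and> closed_submodule \<alpha> M2 \<and>
        contracted_by \<alpha> M1 \<and> contracted_by (inv \<alpha>) M2 \<and>
        M1 \<inter> M2 = {0} \<and>
        continuous_on UNIV p1 \<and> continuous_on UNIV p2 \<and>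
        (\<forall>x. p1 x \<in> M1 \<and> p2 x \<in> M2 \<and> x = p1 x + p2 x))"

end

theory Submission imports Defs begin

lemma nbhd_op:
  fixes W :: "'a::topological_ab_group_add set"
  assumes "open W" "0 \<in> W" and c: "continuous_on UNIV f" and f0: "f (0,0) = (0::'a)"
  shows "\<exists>V. open V \<and> 0 \<in> V \<and> (\<forall>a\<in>V. \<forall>b\<in>V. f (a,b) \<in> W)"
proof -
  have "open (f -` W)" using open_vimage[OF assms(1) c] .
  moreover have "(0,0) \<in> f -` W" using f0 assms by simp
  ultimately obtain A B where AB: "open A" "open B" "(0,0) \<in> A \<times> B" "A \<times> B \<subseteq> f -` W"
    using open_prod_elim by metis
  show ?thesis
    by (rule exI[of _ "A \<inter> B"]) (use AB in auto)
qed

lemma nbhd_add: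
  fixes W :: "'a::topological_ab_group_add set"
  assumes "open W" "0 \<in> W"
  shows "\<exists>V. open V \<and> 0 \<in> V \<and> (\<forall>a\<in>V. \<forall>b\<in>V. a + b \<in> W)"
proof -
  have c: "continuous_on UNIV (\<lambda>p::'a\<times>'a. fst p + snd p)"
    by (intro continuous_on_add continuous_on_fst continuous_on_snd continuous_on_id)
  show ?thesis using nbhd_op[OF assms c] by simp
qed

lemma nbhd_diff:
  fixes W :: "'a::topological_ab_group_add set"
  assumes "open W" "0 \<in> W"
  shows "\<exists>V. open V \<and> 0 \<in> V \<and> (\<forall>a\<in>V. \<forall>b\<in>V. a - b \<in> W)"
proof -
  have c: "continuous_on UNIV (\<lambda>p::'a\<times>'a. fst p - snd p)"
    by (intro continuous_on_diff continuous_on_fst continuous_on_snd continuous_on_id)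
  show ?thesis using nbhd_op[OF assms c] by simp
qed

lemma closure_sub_sum:
  fixes V :: "'a::topological_ab_group_add set"
  assumes "open V" "0 \<in> V" "x \<in> closure V"
  shows "\<exists>a\<in>V. \<exists>b\<in>V. x = a + b"
proof -
  have cc: "continuous_on UNIV (\<lambda>w. x - w)" by (intro continuous_on_diff continuous_on_const continuous_on_id)
  have o: "open {w. x - w \<in> V}"
    using open_vimage[OF assms(1) cc] by (simp add: vimage_def)
  have "x \<in> {w. x - w \<in> V}" using assms by simp
  then have "V \<inter> {w. x - w \<in> V} \<noteq> {}"
    using assms(3)[unfolded closure_iff_nhds_not_empty, rule_format, OF subset_refl o] by simp
  then obtain b where "b \<in> V" "x - b \<in> V" by auto
  then show ?thesis by (metis diff_add_cancel)
qed

lemma openv: "open B \<Longrightarrow> continuous_on UNIV f \<Longrightarrow> open {x. f x \<in> B}"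
  using open_vimage by (auto simp: vimage_def)

lemma closedv: "closed B \<Longrightarrow> continuous_on UNIV f \<Longrightarrow> closed {x. f x \<in> B}"
proof -
  assume a: "closed B" "continuous_on UNIV f"
  have "open {x. f x \<in> - B}" using openv[OF open_Compl[OF a(1)] a(2)] .
  moreover have "{x. f x \<in> - B} = - {x. f x \<in> B}" by auto
  ultimately show ?thesis by (simp add: closed_def)
qed

lemma hausdorff_euc: "Hausdorff_space (euclidean :: 'a::t2_space topology)"
  unfolding Hausdorff_space_def disjnt_def
proof (intro allI impI)
  fix x y :: 'a assume "x \<in> topspace euclidean \<and> y \<in> topspace euclidean \<and> x \<noteq> y"
  then have "x \<noteq> y" by blast
  then obtain U V where UV: "open U" "open V" "x \<in> U" "y \<in> V" "U \<inter> V = {}" using hausdorff[of x y] by blast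
  have "openin euclidean U" "openin euclidean V" using UV(1,2) open_openin by auto
  then show "\<exists>U V. openin euclidean U \<and> openin euclidean V \<and> x \<in> U \<and> y \<in> V \<and> U \<inter> V = {}"
    using UV by blast
qed

locale contr =
  fixes \<beta> \<gamma> :: "'a::{topological_ab_group_add,t2_space} \<Rightarrow> 'a" and N :: "'a set"
  assumes add: "\<And>x y. \<beta> (x+y) = \<beta> x + \<beta> y"
  and hom: "homeomorphism UNIV UNIV \<beta> \<gamma>"
  and cN: "closed N" and N0: "0 \<in> N" and Nsub: "\<And>x y. x\<in>N \<Longrightarrow> y\<in>N \<Longrightarrow> x - y \<in> N"
  and bN: "\<beta> ` N = N"
  and con: "\<And>x. x \<in> N \<Longrightarrow> (\<lambda>n. (\<beta>^^n) x) \<longlonglongrightarrow> 0"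
  and lc: "locally_compact_space (euclidean::'a topology)"
begin

lemma bcont: "continuous_on UNIV \<beta>" and gcont: "continuous_on UNIV \<gamma>"
  and bg: "\<beta> (\<gamma> y) = y" and gb: "\<gamma> (\<beta> x) = x"
  using hom unfolding homeomorphism_def by auto

lemma b0: "\<beta> 0 = 0" using add[of 0 0] by simp
lemma bdiff: "\<beta> (x - y) = \<beta> x - \<beta> y"
  using add[of "x - y" y] by (simp add: algebra_simps)
lemma gadd: "\<gamma> (x + y) = \<gamma> x + \<gamma> y"
proof -
  have e: "x + y = \<beta> (\<gamma> x + \<gamma> y)" by (simp add: add bg)
  show ?thesis by (simp only: e gb)
qed
lemma gdiff: "\<gamma> (x - y) = \<gamma> x - \<gamma> y"
  using gadd[of "x - y" y] by (simp add: algebra_simps)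

lemma Nneg: "x \<in> N \<Longrightarrow> -x \<in> N" using Nsub[OF N0, of x] by simp
lemma Nadd: "x \<in> N \<Longrightarrow> y \<in> N \<Longrightarrow> x + y \<in> N" using Nsub[of x "-y"] Nneg by simp
lemma bNin: "x \<in> N \<Longrightarrow> \<beta> x \<in> N" using bN by (rule equalityD1[THEN subsetD, OF _ imageI])
lemma gNin: assumes "x \<in> N" shows "\<gamma> x \<in> N"
proof -
  from assms bN obtain w where "w \<in> N" "x = \<beta> w" by (metis imageE)
  then show ?thesis by (simp add: gb)
qed

lemma padd: "(\<beta>^^n) (x + y) = (\<beta>^^n) x + (\<beta>^^n) y"
  by (induction n) (auto simp: add)
lemma pdiff: "(\<beta>^^n) (x - y) = (\<beta>^^n) x - (\<beta>^^n) y"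
  by (induction n) (auto simp: bdiff)
lemma pN: "x \<in> N \<Longrightarrow> (\<beta>^^n) x \<in> N"
  by (induction n) (auto simp: bNin)
lemma pcont: "continuous_on UNIV (\<beta>^^n)"
proof (induction n)
  case 0 then show ?case by (simp add: continuous_on_id)
next
  case (Suc n)
  then show ?case using continuous_on_compose[OF Suc, of \<beta>] continuous_on_subset[OF bcont]
    by (simp add: comp_def)
qed
lemma gpdiff: "(\<gamma>^^n) (x - y) = (\<gamma>^^n) x - (\<gamma>^^n) y"
  by (induction n) (auto simp: gdiff)
lemma gpN: "x \<in> N \<Longrightarrow> (\<gamma>^^n) x \<in> N"
  by (induction n) (auto simp: gNin)
lemma gpb: "(\<gamma>^^n) ((\<beta>^^n) x) = x"
proof (induction n arbitrary: x)
  case (Suc n)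
  have "(\<gamma>^^Suc n) ((\<beta>^^Suc n) x) = (\<gamma>^^n) (\<gamma> (\<beta> ((\<beta>^^n) x)))"
    by (metis comp_apply funpow.simps(2) funpow_Suc_right)
  then show ?case using Suc by (simp add: gb)
qed simp

lemma fix0: assumes "x \<in> N" "\<beta> x = x" shows "x = 0"
proof -
  have "(\<beta>^^n) x = x" for n by (induction n) (use assms in auto)
  then have "(\<lambda>n. x) \<longlonglongrightarrow> 0" using con[OF assms(1)] by simp
  then show ?thesis using LIMSEQ_const_iff by blast
qed


lemma ev_small: assumes "x \<in> N" "open V" "0 \<in> V"
  shows "eventually (\<lambda>n. (\<beta>^^n) x \<in> V) sequentially"
  by (rule topological_tendstoD[OF con[OF assms(1)] assms(2,3)])

lemma unifA:
  assumes W: "open W" "0 \<in> W" and S: "compact S" "S \<subseteq> N"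
  shows "eventually (\<lambda>n. \<forall>x\<in>S. (\<beta>^^n) x \<in> W) sequentially"
proof -
  obtain W1 where W1: "open W1" "0\<in>W1" "\<forall>a\<in>W1. \<forall>b\<in>W1. a+b\<in>W" using nbhd_add[OF W] by blast
  obtain W2 where W2: "open W2" "0\<in>W2" "\<forall>a\<in>W2. \<forall>b\<in>W2. a-b\<in>W1" using nbhd_diff[OF W1(1,2)] by blast
  obtain V3 where V3: "open V3" "0\<in>V3" "\<forall>a\<in>V3. \<forall>b\<in>V3. a+b\<in>W2" using nbhd_add[OF W2(1,2)] by blast
  define V where "V = V3 \<inter> W1"
  have oV: "open V" "0 \<in> V" using V3 W1 by (auto simp: V_def)
  have clV: "z \<in> W2" if "z \<in> closure V" for z
    using closure_sub_sum[OF oV that] V3 by (auto simp: V_def)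
  define F where "F k = N \<inter> (\<Inter>n\<in>{k..}. {x. (\<beta>^^n) x \<in> closure V})" for k
  have Fcl: "closed (F k)" for k
    unfolding F_def by (intro closed_Int cN closed_INT ballI closedv pcont) simp
  have Fcov: "\<Union>(range F) = N"
  proof
    show "\<Union>(range F) \<subseteq> N" by (auto simp: F_def)
    show "N \<subseteq> \<Union>(range F)"
    proof
      fix x assume "x \<in> N"
      then have "eventually (\<lambda>n. (\<beta>^^n) x \<in> V) sequentially" by (rule ev_small[OF _ oV])
      then obtain k where "\<forall>n\<ge>k. (\<beta>^^n) x \<in> V" unfolding eventually_sequentially by blast
      then have "x \<in> F k" using \<open>x\<in>N\<close> closure_subset by (auto simp: F_def)
      then show "x \<in> \<Union>(range F)" by blast
    qed
  qed
  define X where "X = top_of_set N"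
  have lcX: "locally_compact_space X \<and> regular_space X"
  proof -
    have "locally_compact_space X" unfolding X_def
      by (rule locally_compact_space_closed_subset[OF lc]) (use cN closed_closedin in auto)
    moreover have "Hausdorff_space X" unfolding X_def
      by (rule Hausdorff_space_subtopology[OF hausdorff_euc])
    ultimately show ?thesis using locally_compact_Hausdorff_or_regular by blast
  qed
  have "X interior_of \<Union>(range F) \<noteq> {}"
    using Fcov N0 interior_of_topspace[of X] by (auto simp: X_def)
  moreover have "countable (range F)" by simp
  ultimately have "\<not> (\<forall>T\<in>range F. closedin X T \<and> X interior_of T = {})"
    using Baire_category_alt[of X "range F"] lcX by blast
  moreover have "closedin X (F k)" for k
    unfolding X_def closedin_subtopology
    by (rule exI[of _ "F k"]) (use Fcl closed_closedin in \<open>auto simp: F_def\<close>)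
  ultimately obtain k where "X interior_of F k \<noteq> {}" by blast
  then obtain x0 T where T: "openin X T" "x0 \<in> T" "T \<subseteq> F k"
    unfolding interior_of_def by blast
  then obtain Q where Q: "open Q" "T = N \<inter> Q" unfolding X_def openin_open by blast
  have x0: "x0 \<in> N" "x0 \<in> Q" using T Q by auto
  have QF: "q \<in> N \<Longrightarrow> q \<in> Q \<Longrightarrow> q \<in> F k" for q using T Q by auto
  define P where "P s = {w. w + x0 - s \<in> Q}" for s
  have oP: "open (P s)" for s unfolding P_def
    by (rule openv[OF Q(1)]) (intro continuous_on_diff continuous_on_add continuous_on_const continuous_on_id)
  have "S \<subseteq> (\<Union>s\<in>S. P s)" using x0 by (auto simp: P_def)
  then obtain C where C: "C \<subseteq> S" "finite C" "S \<subseteq> (\<Union>c\<in>C. P c)"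
    by (rule compactE_image[OF S(1) oP])
  have ev1: "eventually (\<lambda>n. \<forall>c\<in>C. (\<beta>^^n) c \<in> V) sequentially"
    using C S by (intro eventually_ball_finite ballI ev_small oV) auto
  have ev2: "eventually (\<lambda>n. n \<ge> k) sequentially" by (rule eventually_ge_at_top)
  show ?thesis
  proof (rule eventually_mono[OF eventually_conj[OF ev1 ev2]], intro ballI)
    fix n x assume n: "(\<forall>c\<in>C. (\<beta>^^n) c \<in> V) \<and> k \<le> n" and x: "x \<in> S"
    then obtain c where c: "c \<in> C" "x \<in> P c" using C by blast
    define q where "q = x + x0 - c"
    have qN: "q \<in> N" unfolding q_def using x c C S x0 by (intro Nsub Nadd) auto
    have "q \<in> Q" using c by (simp add: P_def q_def)
    then have "q \<in> F k" using QF qN by blast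
    then have a1: "(\<beta>^^n) q \<in> W2" using clV n by (auto simp: F_def)
    have "x0 \<in> F k" using QF x0 by blast
    then have a2: "(\<beta>^^n) x0 \<in> W2" using clV n by (auto simp: F_def)
    have a3: "(\<beta>^^n) c \<in> W1" using n c by (auto simp: V_def)
    have "x = q - x0 + c" by (simp add: q_def)
    then have "(\<beta>^^n) x = ((\<beta>^^n) q - (\<beta>^^n) x0) + (\<beta>^^n) c" by (simp only: padd pdiff)
    moreover have "(\<beta>^^n) q - (\<beta>^^n) x0 \<in> W1" using a1 a2 W2(3) by blast
    ultimately show "(\<beta>^^n) x \<in> W" using a3 W1(3) by metis
  qed
qed

lemma p0: "(\<beta>^^n) 0 = 0" using padd[of n 0 0] by simp

lemma sumN: "(\<And>r. r < (m::nat) \<Longrightarrow> f r \<in> N) \<Longrightarrow> (\<Sum>r<m. f r) \<in> N"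
  by (induction m) (auto simp: N0 Nadd)

lemma tele: "\<beta> (\<Sum>r<m. (\<beta>^^r) y) - (\<Sum>r<m. (\<beta>^^r) y) = (\<beta>^^m) y - y"
proof (induction m)
  case 0 then show ?case by (simp add: b0)
next
  case (Suc m)
  have "\<beta> (\<Sum>r<Suc m. (\<beta>^^r) y) - (\<Sum>r<Suc m. (\<beta>^^r) y)
      = (\<beta> (\<Sum>r<m. (\<beta>^^r) y) - (\<Sum>r<m. (\<beta>^^r) y)) + (\<beta> ((\<beta>^^m) y) - (\<beta>^^m) y)"
    by (simp add: add algebra_simps)
  also have "\<dots> = (\<beta>^^Suc m) y - y" using Suc by simp
  finally show ?case .
qed

lemma bp_comm: "\<beta> ((\<beta>^^m) w) = (\<beta>^^m) (\<beta> w)"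
  by (simp add: funpow_swap1)

lemma local_solve:
  "\<exists>Ob U. open Ob \<and> 0 \<in> Ob \<and> compact U \<and> U \<subseteq> N \<and> (\<forall>y\<in>Ob \<inter> N. \<exists>x\<in>U. \<beta> x - x = - y)"
proof -
  have "(0::'a) \<in> topspace euclidean" by simp
  from bspec[OF lc[unfolded locally_compact_space_def] this]
  obtain O0 K0 :: "'a set" where OK': "openin euclidean O0" "compactin euclidean K0" "0 \<in> O0" "O0 \<subseteq> K0"
    by blast
  have OK: "open O0" "compact K0" "0 \<in> O0" "O0 \<subseteq> K0"
    using open_openin[THEN iffD2, OF OK'(1)] compactin_euclidean_iff[THEN iffD1, OF OK'(2)] OK'(3,4) by auto
  define U where "U = K0 \<inter> N"
  have cU: "compact U" "U \<subseteq> N" unfolding U_def using OK cN by (auto intro: compact_Int_closed)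
  obtain V where V: "open V" "0 \<in> V" "\<forall>a\<in>V. \<forall>b\<in>V. a+b \<in> O0" using nbhd_add[OF OK(1,3)] by blast
  have VU: "a \<in> V \<Longrightarrow> b \<in> V \<Longrightarrow> a \<in> N \<Longrightarrow> b \<in> N \<Longrightarrow> a + b \<in> U" for a b
    using V OK by (auto simp: U_def Nadd)
  have "eventually (\<lambda>n. \<forall>x\<in>U. (\<beta>^^n) x \<in> V) sequentially" by (rule unifA[OF V(1,2) cU])
  then obtain m0 where m0: "\<forall>n\<ge>m0. \<forall>x\<in>U. (\<beta>^^n) x \<in> V"
    unfolding eventually_sequentially by blast
  define m where "m = Suc m0"
  have mV: "x \<in> U \<Longrightarrow> (\<beta>^^m) x \<in> V" for x
    unfolding m_def using m0[rule_format, of "Suc m0" x] by (simp del: funpow.simps)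
  define T where "T y = (\<Sum>r<m. (\<beta>^^r) y)" for y
  have Tc: "continuous_on UNIV T" unfolding T_def by (intro continuous_on_sum pcont)
  have T0: "T 0 = 0" by (simp add: T_def p0)
  define Ob where "Ob = {y. T y \<in> V}"
  have oO: "open Ob" unfolding Ob_def by (rule openv[OF V(1) Tc])
  have O0: "0 \<in> Ob" using T0 V by (simp add: Ob_def)
  have sol: "\<exists>x\<in>U. \<beta> x - x = - y" if y: "y \<in> Ob" "y \<in> N" for y
  proof -
    define z where "z = T y"
    have z: "z \<in> V" "z \<in> N" using y by (auto simp: z_def Ob_def T_def intro!: sumN pN)
    have phz: "\<beta> z - z = (\<beta>^^m) y - y" unfolding z_def T_def by (rule tele)
    define t where "t j = ((\<lambda>w. z + (\<beta>^^m) w)^^j) 0" for j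
    have tS: "t (Suc j) = z + (\<beta>^^m) (t j)" for j by (simp add: t_def)
    have t0: "t 0 = 0" by (simp add: t_def)
    have tU: "t j \<in> U" for j
    proof (induction j)
      case 0 then show ?case using VU[OF V(2) V(2) N0 N0] t0 by simp
    next
      case (Suc j)
      then show ?case using VU[OF z(1) mV[OF Suc] z(2) pN] cU(2) tS by auto
    qed
    have tph: "\<beta> (t j) - t j = (\<beta>^^(j*m)) y - y" for j
    proof (induction j)
      case 0 then show ?case by (simp add: t0 b0)
    next
      case (Suc j)
      have "\<beta> (t (Suc j)) - t (Suc j) = (\<beta> z - z) + (\<beta>^^m) (\<beta> (t j) - t j)"
        by (simp add: tS add pdiff bp_comm algebra_simps)
      also have "\<dots> = (\<beta>^^(Suc j * m)) y - y"
        using Suc phz by (simp add: pdiff funpow_add o_def)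
      finally show ?case .
    qed
    have sm: "strict_mono (\<lambda>j. j * m)" by (intro strict_monoI mult_strict_right_mono) (auto simp: m_def)
    have lim: "(\<lambda>j. \<beta> (t j) - t j) \<longlonglongrightarrow> 0 - y"
      unfolding tph using tendsto_diff[OF LIMSEQ_subseq_LIMSEQ[OF con[OF y(2)] sm] tendsto_const[of y]]
      by (simp add: o_def)
    define Fl where "Fl = filtermap t sequentially"
    have "Fl \<noteq> bot" by (simp add: Fl_def filtermap_bot_iff)
    moreover have "eventually (\<lambda>x. x \<in> U) Fl" by (simp add: Fl_def eventually_filtermap tU)
    ultimately have "\<exists>x\<in>U. inf (nhds x) Fl \<noteq> bot"
      using cU(1)[unfolded compact_filter, rule_format] by blast
    then obtain x where x: "x \<in> U" "inf (nhds x) Fl \<noteq> bot" by blast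
    have "\<beta> x - x = - y"
    proof (rule ccontr)
      assume ne: "\<beta> x - x \<noteq> - y"
      obtain A B where AB: "open A" "open B" "\<beta> x - x \<in> A" "- y \<in> B" "A \<inter> B = {}"
        using hausdorff[OF ne] by blast
      have cph: "continuous_on UNIV (\<lambda>w. \<beta> w - w)"
        by (intro continuous_on_diff bcont continuous_on_id)
      have "eventually (\<lambda>w. w \<in> {w. \<beta> w - w \<in> A}) (nhds x)"
        by (rule eventually_nhds_in_open[OF openv[OF AB(1) cph]]) (use AB(3) in simp)
      then have e1: "eventually (\<lambda>w. \<beta> w - w \<in> A) (nhds x)" by simp
      have "0 - y \<in> B" using AB(4) by simp
      then have "eventually (\<lambda>j. \<beta> (t j) - t j \<in> B) sequentially"
        by (rule topological_tendstoD[OF lim AB(2)])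
      then have e2: "eventually (\<lambda>w. \<beta> w - w \<in> B) Fl" by (simp add: Fl_def eventually_filtermap)
      have "eventually (\<lambda>w. False) (inf (nhds x) Fl)"
        unfolding eventually_inf
        apply (rule exI[of _ "\<lambda>w. \<beta> w - w \<in> A"], rule exI[of _ "\<lambda>w. \<beta> w - w \<in> B"])
        using e1 e2 AB(5) by auto
      then have "inf (nhds x) Fl = bot" by (simp only: eventually_False)
      with x(2) show False by simp
    qed
    then show ?thesis using x by blast
  qed
  show ?thesis using oO O0 cU sol by blast
qed

lemma gp_comm: "(\<gamma>^^n) (\<beta> w) = \<beta> ((\<gamma>^^n) w)"
proof (induction n)
  case 0 then show ?case by simp
next
  case (Suc n)
  have "(\<gamma>^^Suc n) (\<beta> w) = \<gamma> (\<beta> ((\<gamma>^^n) w))" using Suc by simp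
  also have "\<dots> = (\<gamma>^^n) w" by (simp add: gb)
  also have "\<dots> = \<beta> ((\<gamma>^^Suc n) w)" by (simp add: bg)
  finally show ?case .
qed

lemma gp0: "(\<gamma>^^n) 0 = 0" using gpdiff[of n 0 0] by simp
lemma bneg: "\<beta> (- x) = - \<beta> x" using bdiff[of 0 x] b0 by simp

lemma uniq: assumes "a \<in> N" "b \<in> N" "\<beta> a - a = \<beta> b - b" shows "a = b"
proof -
  have "\<beta> (a - b) = a - b" using assms(3) by (simp add: bdiff algebra_simps)
  then have "a - b = 0" using fix0 Nsub[OF assms(1,2)] by blast
  then show ?thesis by simp
qed

lemma solve_exists: assumes y: "y \<in> N" shows "\<exists>x\<in>N. \<beta> x - x = y"
proof -
  obtain Ob U where OU: "open Ob" "0 \<in> Ob" "compact U" "U \<subseteq> N"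
     "\<forall>y\<in>Ob \<inter> N. \<exists>x\<in>U. \<beta> x - x = - y" using local_solve by blast
  have "eventually (\<lambda>n. (\<beta>^^n) (-y) \<in> Ob) sequentially" by (rule ev_small[OF Nneg[OF y] OU(1,2)])
  then obtain n where n: "(\<beta>^^n) (-y) \<in> Ob" unfolding eventually_sequentially by blast
  have "(\<beta>^^n) (-y) \<in> N" by (rule pN[OF Nneg[OF y]])
  then have "(\<beta>^^n) (-y) \<in> Ob \<inter> N" using n by blast
  from bspec[OF OU(5) this] obtain x' where x': "x' \<in> U" "\<beta> x' - x' = - (\<beta>^^n) (-y)" by blast
  have "\<beta> ((\<gamma>^^n) x') - (\<gamma>^^n) x' = (\<gamma>^^n) (\<beta> x' - x')" by (simp add: gpdiff gp_comm)
  also have "\<dots> = (\<gamma>^^n) (0 - (\<beta>^^n) (-y))" using x' by simp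
  also have "\<dots> = y" by (simp only: gpdiff gp0 gpb) simp
  finally show ?thesis using gpN x' OU(4) by blast
qed

lemma solve_all: "\<exists>\<psi>. continuous_on N \<psi> \<and> (\<forall>y\<in>N. \<psi> y \<in> N \<and> \<beta> (\<psi> y) - \<psi> y = y)"
proof -
  obtain Ob U where OU: "open Ob" "0 \<in> Ob" "compact U" "U \<subseteq> N"
     "\<forall>y\<in>Ob \<inter> N. \<exists>x\<in>U. \<beta> x - x = - y" using local_solve by blast
  define \<psi> where "\<psi> y = (SOME x. x \<in> N \<and> \<beta> x - x = y)" for y
  have P1: "\<psi> y \<in> N \<and> \<beta> (\<psi> y) - \<psi> y = y" if "y \<in> N" for y
    unfolding \<psi>_def using someI_ex[OF solve_exists[OF that, unfolded Bex_def]] .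
  have P2: "\<psi> y = x" if "y \<in> N" "x \<in> N" "\<beta> x - x = y" for x y
  proof (rule uniq)
    show "\<psi> y \<in> N" using P1[OF that(1)] by blast
    show "x \<in> N" by (rule that(2))
    have "\<beta> (\<psi> y) - \<psi> y = y" using P1[OF that(1)] by blast
    then show "\<beta> (\<psi> y) - \<psi> y = \<beta> x - x" using that(3) by simp
  qed
  have P3: "\<psi> y \<in> uminus ` U" if "y \<in> Ob" "y \<in> N" for y
  proof -
    have "y \<in> Ob \<inter> N" using that by blast
    from bspec[OF OU(5) this] obtain x where x: "x \<in> U" "\<beta> x - x = - y" by blast
    have "\<beta> (-x) - (-x) = - (\<beta> x - x)" by (simp add: bneg)
    also have "\<dots> = y" using x(2) by simp
    finally have "\<beta> (-x) - (-x) = y" .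
    moreover have "x \<in> N" using x(1) OU(4) by blast
    ultimately have "\<psi> y = - x" using P2[OF that(2)] Nneg by blast
    then show ?thesis using x(1) by (simp add: image_iff)
  qed
  have P4: "\<psi> (y - y0) = \<psi> y - \<psi> y0" if "y \<in> N" "y0 \<in> N" for y y0
  proof (rule P2[OF Nsub[OF that] Nsub[OF P1[OF that(1), THEN conjunct1] P1[OF that(2), THEN conjunct1]]])
    have "\<beta> (\<psi> y - \<psi> y0) - (\<psi> y - \<psi> y0) = (\<beta> (\<psi> y) - \<psi> y) - (\<beta> (\<psi> y0) - \<psi> y0)"
      by (simp add: bdiff)
    also have "\<dots> = y - y0" using P1[OF that(1)] P1[OF that(2)] by simp
    finally show "\<beta> (\<psi> y - \<psi> y0) - (\<psi> y - \<psi> y0) = y - y0" .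
  qed
  have cph: "continuous_on S (\<lambda>w. \<beta> w - w)" for S
    by (intro continuous_on_diff continuous_on_subset[OF bcont] continuous_on_id) auto
  have C0: "\<exists>O2. open O2 \<and> 0 \<in> O2 \<and> (\<forall>y\<in>N. y \<in> O2 \<longrightarrow> \<psi> y \<in> W)" if W: "open W" "0 \<in> W" for W
  proof -
    define A where "A = uminus ` U \<inter> - W"
    have cA: "compact A" unfolding A_def
      by (intro compact_Int_closed compact_continuous_image OU(3) closed_Compl W(1)
          continuous_on_minus continuous_on_id)
    have AN: "A \<subseteq> N" using OU(4) Nneg by (auto simp: A_def)
    have clA: "closed ((\<lambda>w. \<beta> w - w) ` A)"
      by (intro compact_imp_closed compact_continuous_image cA cph)
    have nA: "0 \<notin> (\<lambda>w. \<beta> w - w) ` A"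
    proof
      assume "0 \<in> (\<lambda>w. \<beta> w - w) ` A"
      then obtain a where a: "a \<in> A" "\<beta> a - a = 0" by auto
      then have "a = 0" using uniq[of a 0] AN N0 b0 by auto
      then show False using a(1) W(2) by (auto simp: A_def)
    qed
    define O2 where "O2 = Ob \<inter> - ((\<lambda>w. \<beta> w - w) ` A)"
    have "open O2" unfolding O2_def using OU(1) clA by (intro open_Int open_Compl)
    moreover have "0 \<in> O2" using OU(2) nA by (simp add: O2_def)
    moreover have "\<psi> y \<in> W" if "y \<in> N" "y \<in> O2" for y
    proof (rule ccontr)
      assume "\<psi> y \<notin> W"
      moreover have "\<psi> y \<in> uminus ` U" using P3 that by (auto simp: O2_def)
      ultimately have "\<psi> y \<in> A" by (simp add: A_def)
      then have "\<beta> (\<psi> y) - \<psi> y \<in> (\<lambda>w. \<beta> w - w) ` A" by blast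
      then have "y \<in> (\<lambda>w. \<beta> w - w) ` A" using P1[OF that(1)] by simp
      then show False using that(2) by (simp add: O2_def)
    qed
    ultimately show ?thesis by blast
  qed
  have "continuous_on N \<psi>"
    unfolding continuous_on_topological
  proof (intro ballI allI impI)
    fix y0 B assume y0: "y0 \<in> N" and B: "open B" "\<psi> y0 \<in> B"
    define W where "W = {w. w + \<psi> y0 \<in> B}"
    have "open W" unfolding W_def
      by (rule openv[OF B(1)]) (intro continuous_on_add continuous_on_id continuous_on_const)
    moreover have "0 \<in> W" using B(2) by (simp add: W_def)
    ultimately obtain O2 where O2: "open O2" "0 \<in> O2" "\<forall>y\<in>N. y \<in> O2 \<longrightarrow> \<psi> y \<in> W"
      using C0 by blast
    define A where "A = {y. y - y0 \<in> O2}"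
    have "open A" unfolding A_def
      by (rule openv[OF O2(1)]) (intro continuous_on_diff continuous_on_id continuous_on_const)
    moreover have "y0 \<in> A" using O2(2) by (simp add: A_def)
    moreover have "\<psi> y \<in> B" if "y \<in> N" "y \<in> A" for y
    proof -
      have "\<psi> (y - y0) \<in> W" using O2(3) Nsub[OF that(1) y0] that(2) by (simp add: A_def)
      then show ?thesis using P4[OF that(1) y0] by (simp add: W_def)
    qed
    ultimately show "\<exists>A. open A \<and> y0 \<in> A \<and> (\<forall>y\<in>N. y \<in> A \<longrightarrow> \<psi> y \<in> B)" by blast
  qed
  then show ?thesis using P1 by blast
qed
end
theorem mainTheorem5:
  fixes \<alpha> :: "'a::{topological_ab_group_add, t2_space} \<Rightarrow> 'a"
  assumes "LCA_group TYPE('a)"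
    and "top_group_aut \<alpha>"
    and "polycontractable \<alpha>"
  shows "(\<forall>x y. (\<alpha> (x + y) - (x + y)) = (\<alpha> x - x) + (\<alpha> y - y))
       \<and> (\<forall>x. \<alpha> (\<alpha> x - x) = \<alpha> (\<alpha> x) - \<alpha> x)
       \<and> (\<exists>g. homeomorphism UNIV UNIV (\<lambda>x. \<alpha> x - x) g)"
proof -
  have lc: "locally_compact_space (euclidean::'a topology)" using assms(1) by (simp add: LCA_group_def)
  have add: "\<And>x y. \<alpha> (x + y) = \<alpha> x + \<alpha> y" using assms(2) by (simp add: top_group_aut_def)
  obtain g0 where hom: "homeomorphism UNIV UNIV \<alpha> g0" using assms(2) by (auto simp: top_group_aut_def)
  have ga: "g0 (\<alpha> x) = x" and ag: "\<alpha> (g0 y) = y" for x y using hom by (auto simp: homeomorphism_def)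
  have acont: "continuous_on UNIV \<alpha>" and gcont: "continuous_on UNIV g0"
    using hom by (auto simp: homeomorphism_def)
  have invg: "inv \<alpha> = g0" by (rule inv_equality) (simp_all add: ga ag)
  obtain M1 M2 p1 p2 where P:
    "closed_submodule \<alpha> M1" "closed_submodule \<alpha> M2"
    "contracted_by \<alpha> M1" "contracted_by (inv \<alpha>) M2"
    "M1 \<inter> M2 = {0}" "continuous_on UNIV p1" "continuous_on UNIV p2"
    "\<forall>x. p1 x \<in> M1 \<and> p2 x \<in> M2 \<and> x = p1 x + p2 x"
    using assms(3) unfolding polycontractable_def by (elim exE conjE) (erule that, assumption+)
  have p1M: "p1 x \<in> M1" and p2M: "p2 x \<in> M2" for x
    using P(8) by blast+
  have dec: "p1 x + p2 x = x" for x
  proof -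
    have "x = p1 x + p2 x" using P(8) by blast
    then show ?thesis by (rule sym)
  qed
  have M1: "closed M1" "0 \<in> M1" "\<And>x y. x\<in>M1 \<Longrightarrow> y\<in>M1 \<Longrightarrow> x - y \<in> M1" "\<alpha> ` M1 = M1"
    using P(1) unfolding closed_submodule_def by auto
  have M2: "closed M2" "0 \<in> M2" "\<And>x y. x\<in>M2 \<Longrightarrow> y\<in>M2 \<Longrightarrow> x - y \<in> M2" "\<alpha> ` M2 = M2"
    using P(2) unfolding closed_submodule_def by auto
  have con1: "\<And>x. x \<in> M1 \<Longrightarrow> (\<lambda>n. (\<alpha> ^^ n) x) \<longlonglongrightarrow> 0" using P(3) by (simp add: contracted_by_def)
  interpret c1: contr \<alpha> g0 M1
    by (rule contr.intro) (rule add, rule hom, rule M1(1), rule M1(2), erule (1) M1(3), rule M1(4), erule con1, rule lc)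
  have g0M2: "g0 ` M2 = M2"
  proof
    show "g0 ` M2 \<subseteq> M2"
    proof
      fix z assume "z \<in> g0 ` M2"
      then obtain w where w: "w \<in> M2" "z = g0 w" by (rule imageE) 
      have "w \<in> \<alpha> ` M2" using w(1) M2(4) by simp
      then obtain u where u: "w = \<alpha> u" "u \<in> M2" by (rule imageE)
      have "z = u" using w(2) u(1) ga by simp
      then show "z \<in> M2" using u(2) by simp
    qed
    show "M2 \<subseteq> g0 ` M2"
    proof
      fix z assume z: "z \<in> M2"
      have "\<alpha> z \<in> M2" using imageI[OF z, of \<alpha>] M2(4) by simp
      then show "z \<in> g0 ` M2" by (rule image_eqI[rotated]) (simp add: ga)
    qed
  qed
  have cg: "contracted_by g0 M2" using P(4) by (simp only: invg)
  have con2: "(\<lambda>n. (g0 ^^ n) x) \<longlonglongrightarrow> 0" if "x \<in> M2" for x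
    using cg[unfolded contracted_by_def] that by (rule bspec)
  have hom2: "homeomorphism UNIV UNIV g0 \<alpha>" by (rule homeomorphism_symD[OF hom])
  interpret c2: contr g0 \<alpha> M2
    by (rule contr.intro) (rule c1.gadd, rule hom2, rule M2(1), rule M2(2), erule (1) M2(3), rule g0M2, erule con2, rule lc)
  obtain \<psi>1 where \<psi>1: "continuous_on M1 \<psi>1" "\<And>y. y\<in>M1 \<Longrightarrow> \<psi>1 y \<in> M1 \<and> \<alpha> (\<psi>1 y) - \<psi>1 y = y"
    using c1.solve_all by blast
  obtain \<psi>2 where \<psi>2: "continuous_on M2 \<psi>2" "\<And>y. y\<in>M2 \<Longrightarrow> \<psi>2 y \<in> M2 \<and> g0 (\<psi>2 y) - \<psi>2 y = y"
    using c2.solve_all by blast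
  define h where "h y = g0 (\<psi>2 (- y))" for y
  have hsol: "\<alpha> (h y) - h y = y" if "y \<in> M2" for y
  proof -
    have "- y \<in> M2" using c2.Nneg[OF that] .
    then have e: "g0 (\<psi>2 (- y)) - \<psi>2 (- y) = - y" using \<psi>2(2) by blast
    have "\<alpha> (h y) - h y = \<psi>2 (- y) - g0 (\<psi>2 (- y))" by (simp add: h_def ag)
    also have "\<dots> = - (g0 (\<psi>2 (- y)) - \<psi>2 (- y))" by simp
    also have "\<dots> = y" by (simp only: e) simp
    finally show ?thesis .
  qed
  have hcont: "continuous_on M2 h"
  proof -
    have "continuous_on M2 (\<lambda>y. \<psi>2 (- y))"
      by (rule continuous_on_compose2[OF \<psi>2(1) continuous_on_minus[OF continuous_on_id]])
        (use c2.Nneg in auto)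
    then show ?thesis unfolding h_def
      by (rule continuous_on_compose2[OF gcont]) simp
  qed
  define g where "g y = \<psi>1 (p1 y) + h (p2 y)" for y
  define \<phi> where "\<phi> x = \<alpha> x - x" for x
  have phadd: "\<phi> (x + y) = \<phi> x + \<phi> y" for x y by (simp add: \<phi>_def add algebra_simps)
  have phdiff: "\<phi> (x - y) = \<phi> x - \<phi> y" for x y by (simp add: \<phi>_def c1.bdiff algebra_simps)
  have phg: "\<phi> (g y) = y" for y
  proof -
    have "\<phi> (g y) = \<phi> (\<psi>1 (p1 y)) + \<phi> (h (p2 y))" by (simp add: g_def phadd)
    also have "\<phi> (\<psi>1 (p1 y)) = p1 y" using \<psi>1(2)[OF p1M] by (simp add: \<phi>_def)
    also have "\<phi> (h (p2 y)) = p2 y" using hsol[OF p2M] by (simp add: \<phi>_def)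
    finally show ?thesis by (simp only: dec)
  qed
  have inj0: "w = 0" if w: "\<phi> w = 0" for w
  proof -
    define a where "a = p1 w"
    define b where "b = p2 w"
    have ab: "a \<in> M1" "b \<in> M2" "w = a + b" unfolding a_def b_def using p1M p2M dec[symmetric] by auto
    have aa: "\<alpha> a \<in> M1" using c1.bNin ab(1) .
    have bb: "\<alpha> b \<in> M2" using c2.gNin ab(2) .
    have e: "\<alpha> a - a = b - \<alpha> b"
    proof -
      have "\<phi> (a + b) = 0" using w ab(3) by simp
      then have "\<alpha> a + \<alpha> b - (a + b) = 0" by (simp add: \<phi>_def add)
      then show ?thesis by (simp add: algebra_simps)
    qed
    have "\<alpha> a - a \<in> M1" using M1(3)[OF aa ab(1)] .
    moreover have "b - \<alpha> b \<in> M2" using M2(3)[OF ab(2) bb] .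
    ultimately have "\<alpha> a - a \<in> M1 \<inter> M2" using e by simp
    then have "\<alpha> a - a \<in> {0}" using P(5) by simp
    then have z: "\<alpha> a - a = 0" by simp
    then have "\<alpha> a = a" by simp
    then have a0: "a = 0" by (rule c1.fix0[OF ab(1)])
    have "b - \<alpha> b = 0" using z e by simp
    then have bb': "\<alpha> b = b" by simp
    have "g0 b = b" using ga[of b] bb' by simp
    then have b0: "b = 0" by (rule c2.fix0[OF ab(2)])
    show ?thesis using ab(3) a0 b0 by simp
  qed
  have gph: "g (\<phi> x) = x" for x
  proof -
    have "\<phi> (g (\<phi> x) - x) = 0" by (simp add: phdiff phg)
    then have "g (\<phi> x) - x = 0" by (rule inj0)
    then show ?thesis by simp
  qed
  have phcont: "continuous_on UNIV \<phi>" unfolding \<phi>_def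
    by (intro continuous_on_diff acont continuous_on_id)
  have gcont2: "continuous_on UNIV g" unfolding g_def
  proof (intro continuous_on_add)
    show "continuous_on UNIV (\<lambda>x. \<psi>1 (p1 x))"
      by (rule continuous_on_compose2[OF \<psi>1(1) P(6)]) (use p1M in auto)
    show "continuous_on UNIV (\<lambda>x. h (p2 x))"
      by (rule continuous_on_compose2[OF hcont P(7)]) (use p2M in auto)
  qed
  have "homeomorphism UNIV UNIV \<phi> g"
    by (rule homeomorphismI[OF phcont gcont2]) (simp_all add: gph phg)
  then have "\<exists>g. homeomorphism UNIV UNIV (\<lambda>x. \<alpha> x - x) g" unfolding \<phi>_def[abs_def] by blast
  moreover have "\<forall>x y. (\<alpha> (x + y) - (x + y)) = (\<alpha> x - x) + (\<alpha> y - y)" by (simp add: add algebra_simps)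
  moreover have "\<forall>x. \<alpha> (\<alpha> x - x) = \<alpha> (\<alpha> x) - \<alpha> x" by (simp add: c1.bdiff)
  ultimately show ?thesis by blast
qed

end
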